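(* Let $D$ be a discrete space, $M$ a Tychonoff space and $\pi:D\to M$ a map such that $M$ is countably compact at the set $\pi(D)$. Regard $\pi$ also as a map $D\to\beta M$, where $\beta M$ is the Stone–Čech compactification of $M$. Then the compact space $D\cup_\pi\beta M$ (which contains $D\cup_\pi M$ as a subspace) is the Stone–Čech compactification of $D\cup_\pi M$; i.e. the Stone–Čech extension $\beta(D\cup_\pi M)\to D\cup_\pi\beta M$ of the inclusion $D\cup_\pi M\subset D\cup_\pi \beta M$ is a homeomorphism.
   Context: For a discrete space $D$: if $D$ is infinite, $\alpha D=D\cup\{\infty\}$ denotes its one-point (Aleksandrov) compactification; if $D$ is finite, $\alpha D=D\cup\{\infty\}$ is the topological sum of $D$ and a singleton $\{\infty\}$ with $\infty\notin D$. For a map $\pi:D\to M$ into a $T_1$ space $M$, $D\cup_\pi M$ is the subspace $\{(x,\pi(x)):x\in D\}\cup(\{\infty\}\times M)$ of $\alpha D\times M$. A space $X$ is countably compact at a subset $A\subset X$ if every infinite subset $B\subset A$ has an accumulation point in $X$, i.e. a point $x$ each neighborhood of which contains infinitely many points of $B$. *)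

theory Defs
  imports "HOL-Analysis.Analysis"
begin

text \<open>The space alpha D for a discrete space D (a set of type 'a, with the discrete
 topology).  The point infinity is None, a point x of D is Some x.  For infinite D this
 is the one-point compactification; for finite D every subset is open, i.e. it is the
 topological sum of D and the singleton.\<close>
definition alpha_top :: "'a set \<Rightarrow> 'a option topology" where
  "alpha_top D = topology (\<lambda>U. U \<subseteq> insert None (Some ` D) \<and>
                                (None \<in> U \<longrightarrow> finite (Some ` D - U)))"

text \<open>The space D \<union>_\<pi> M as a subspace of alpha D \<times> M.\<close>
definition glue_top :: "'a set \<Rightarrow> ('a \<Rightarrow> 'b) \<Rightarrow> 'b topology \<Rightarrow> ('a option \<times> 'b) topology" where
  "glue_top D \<pi> M = subtopology (prod_topology (alpha_top D) M)
      ((\<lambda>x. (Some x, \<pi> x)) ` D \<union> ({None} \<times> topspace M))"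

definition countably_compact_at :: "'a topology \<Rightarrow> 'a set \<Rightarrow> bool" where
  "countably_compact_at X A \<longleftrightarrow>
     (\<forall>B. B \<subseteq> A \<and> infinite B \<longrightarrow>
        (\<exists>x\<in>topspace X. \<forall>U. openin X U \<and> x \<in> U \<longrightarrow> infinite (U \<inter> B)))"

definition tychonoff_space :: "'a topology \<Rightarrow> bool" where
  "tychonoff_space X \<longleftrightarrow> completely_regular_space X \<and> t1_space X"

definition stone_cech_compactification ::
    "'a topology \<Rightarrow> ('a \<Rightarrow> 'b) \<Rightarrow> 'b topology \<Rightarrow> bool" where
  "stone_cech_compactification X e K \<longleftrightarrow>
     compact_space K \<and> Hausdorff_space K \<and> embedding_map X K e \<and>
     K closure_of (e ` topspace X) = topspace K \<and>
     (\<forall>f. continuous_map X euclideanreal f \<and> bounded (f ` topspace X) \<longrightarrow>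
        (\<exists>g. continuous_map K euclideanreal g \<and> (\<forall>x\<in>topspace X. g (e x) = f x)))"

end

theory Submission
  imports Defs
begin

lemma istop_alpha: "istopology (\<lambda>U. U \<subseteq> insert None (Some ` D) \<and> (None \<in> U \<longrightarrow> finite (Some ` D - U)))"
proof -
  have 1: "S \<inter> T \<subseteq> insert None (Some ` D) \<and> (None \<in> S \<inter> T \<longrightarrow> finite (Some ` D - S \<inter> T))"
    if a: "S \<subseteq> insert None (Some ` D) \<and> (None \<in> S \<longrightarrow> finite (Some ` D - S))"
     and b: "T \<subseteq> insert None (Some ` D) \<and> (None \<in> T \<longrightarrow> finite (Some ` D - T))" for S T :: "'a option set"
  proof -
    have "Some ` D - (S \<inter> T) = (Some ` D - S) \<union> (Some ` D - T)" by blast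
    then show ?thesis using a b by auto
  qed
  have 2: "\<Union> K \<subseteq> insert None (Some ` D) \<and> (None \<in> \<Union> K \<longrightarrow> finite (Some ` D - \<Union> K))"
    if a: "\<forall>S\<in>K. S \<subseteq> insert None (Some ` D) \<and> (None \<in> S \<longrightarrow> finite (Some ` D - S))" for K
  proof (intro conjI impI)
    show "\<Union> K \<subseteq> insert None (Some ` D)" using a by blast
    assume "None \<in> \<Union> K"
    then obtain S where "S \<in> K" "None \<in> S" by blast
    then have "finite (Some ` D - S)" using a by blast
    then show "finite (Some ` D - \<Union> K)" by (rule finite_subset[rotated]) (use \<open>S \<in> K\<close> in blast)
  qed
  show ?thesis unfolding istopology_def using 1 2 by blast
qed

lemma openin_alpha: "openin (alpha_top D) U \<longleftrightarrow> U \<subseteq> insert None (Some ` D) \<and> (None \<in> U \<longrightarrow> finite (Some ` D - U))"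
  unfolding alpha_top_def by (simp add: istop_alpha)

lemma topspace_alpha: "topspace (alpha_top D) = insert None (Some ` D)"
proof -
  have "openin (alpha_top D) (insert None (Some ` D))" by (simp add: openin_alpha)
  then have "insert None (Some ` D) \<subseteq> topspace (alpha_top D)" by (rule openin_subset)
  moreover have "topspace (alpha_top D) \<subseteq> insert None (Some ` D)"
    using openin_topspace[of "alpha_top D"] unfolding openin_alpha by blast
  ultimately show ?thesis by blast
qed

lemma compact_alpha: "compact_space (alpha_top D)"
  unfolding compact_space_alt topspace_alpha
proof (intro allI impI)
  fix U :: "'a option set set"
  assume a: "(\<forall>x\<in>U. openin (alpha_top D) x) \<and> insert None (Some ` D) \<subseteq> \<Union> U"
  then obtain S where S: "S \<in> U" "None \<in> S" by blast
  then have fin: "finite (Some ` D - S)" using a openin_alpha by blast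
  have "\<forall>y\<in>Some ` D - S. \<exists>V\<in>U. y \<in> V" using a by blast
  then obtain c where c: "\<forall>y\<in>Some ` D - S. c y \<in> U \<and> y \<in> c y" by metis
  have "finite (insert S (c ` (Some ` D - S)))" using fin by simp
  moreover have "insert S (c ` (Some ` D - S)) \<subseteq> U" using c S by blast
  moreover have "insert None (Some ` D) \<subseteq> \<Union> (insert S (c ` (Some ` D - S)))"
  proof
    fix y assume y: "y \<in> insert None (Some ` D)"
    show "y \<in> \<Union> (insert S (c ` (Some ` D - S)))"
    proof (cases "y \<in> S")
      case True then show ?thesis by blast
    next
      case False then have "y \<in> Some ` D - S" using y S by blast
      then show ?thesis using c by blast
    qed
  qed
  ultimately show "\<exists>F. finite F \<and> F \<subseteq> U \<and> insert None (Some ` D) \<subseteq> \<Union> F" by blast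
qed

lemma openin_alpha_Some: "x \<in> D \<Longrightarrow> openin (alpha_top D) {Some x}"
  by (simp add: openin_alpha)

lemma openin_alpha_cofin: "finite F \<Longrightarrow> openin (alpha_top D) (insert None (Some ` D) - F)"
  unfolding openin_alpha
proof (intro conjI impI)
  assume "finite F"
  show "insert None (Some ` D) - F \<subseteq> insert None (Some ` D)" by blast
  have "Some ` D - (insert None (Some ` D) - F) \<subseteq> F" by blast
  then show "finite (Some ` D - (insert None (Some ` D) - F))" using \<open>finite F\<close> finite_subset by blast
qed

lemma Hausdorff_alpha: "Hausdorff_space (alpha_top D)"
  unfolding Hausdorff_space_def topspace_alpha
proof (intro allI impI)
  fix x y :: "'a option" assume xy: "x \<in> insert None (Some ` D) \<and> y \<in> insert None (Some ` D) \<and> x \<noteq> y"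
  have co: "openin (alpha_top D) (insert None (Some ` D) - {Some z})" for z
    by (rule openin_alpha_cofin) simp
  show "\<exists>U V. openin (alpha_top D) U \<and> openin (alpha_top D) V \<and> x \<in> U \<and> y \<in> V \<and> disjnt U V"
  proof (cases x)
    case None
    then obtain z where z: "y = Some z" "z \<in> D" using xy by auto
    have "disjnt (insert None (Some ` D) - {Some z}) {Some z}" by (simp add: disjnt_def)
    then show ?thesis using co[of z] openin_alpha_Some[OF z(2)] z None by blast
  next
    case (Some z)
    then have z: "z \<in> D" using xy by auto
    have "y \<in> insert None (Some ` D) - {Some z}" using xy Some by auto
    moreover have "disjnt {Some z} (insert None (Some ` D) - {Some z})" by (simp add: disjnt_def)
    ultimately show ?thesis using co[of z] openin_alpha_Some[OF z] Some by blast
  qed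
qed

lemma topspace_glue:
  assumes "\<pi> ` D \<subseteq> topspace M"
  shows "topspace (glue_top D \<pi> M) = (\<lambda>x. (Some x, \<pi> x)) ` D \<union> ({None} \<times> topspace M)"
  unfolding glue_top_def using assms by (auto simp: topspace_alpha)

lemma Hausdorff_glue: "Hausdorff_space M \<Longrightarrow> Hausdorff_space (glue_top D \<pi> M)"
  unfolding glue_top_def
  by (intro Hausdorff_space_subtopology Hausdorff_space_prod_topology[THEN iffD2]) (simp add: Hausdorff_alpha)

lemma closedin_glue_set:
  assumes "Hausdorff_space M" "\<pi> ` D \<subseteq> topspace M"
  shows "closedin (prod_topology (alpha_top D) M) ((\<lambda>x. (Some x, \<pi> x)) ` D \<union> ({None} \<times> topspace M))"
  unfolding closedin_def
proof
  let ?S = "(\<lambda>x. (Some x, \<pi> x)) ` D \<union> ({None} \<times> topspace M)"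
  show "?S \<subseteq> topspace (prod_topology (alpha_top D) M)"
  proof -
    have "(\<lambda>x. (Some x, \<pi> x)) ` D \<subseteq> insert None (Some ` D) \<times> topspace M" using assms(2) by auto
    moreover have "{None} \<times> topspace M \<subseteq> insert None (Some ` D) \<times> topspace M" by auto
    ultimately show ?thesis unfolding topspace_prod_topology topspace_alpha by (rule Un_least)
  qed
  show "openin (prod_topology (alpha_top D) M) (topspace (prod_topology (alpha_top D) M) - ?S)"
    unfolding openin_prod_topology_alt
  proof (intro allI impI)
    fix a b assume ab: "(a, b) \<in> topspace (prod_topology (alpha_top D) M) - ?S"
    then have a: "a \<in> insert None (Some ` D)" and b: "b \<in> topspace M" and nS: "(a,b) \<notin> ?S"
      unfolding topspace_prod_topology topspace_alpha by blast+
    have "a \<noteq> None"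
    proof
      assume "a = None"
      with b have "(a,b) \<in> {None} \<times> topspace M" by simp
      with nS show False by blast
    qed
    then obtain x where x: "a = Some x" "x \<in> D" using a by blast
    have xb: "b \<noteq> \<pi> x"
    proof
      assume "b = \<pi> x"
      then have "(a,b) \<in> (\<lambda>x. (Some x, \<pi> x)) ` D" using x by simp
      with nS show False by blast
    qed
    have t1: "t1_space M" using assms(1) Hausdorff_imp_t1_space by blast
    have "\<pi> x \<in> topspace M" using assms(2) x(2) by auto
    then have "closedin M {\<pi> x}" using t1_space_closedin_singleton[THEN iffD1, OF t1] by simp
    then have V: "openin M (topspace M - {\<pi> x})" by (simp add: closedin_def)
    have "{Some x} \<times> (topspace M - {\<pi> x}) \<subseteq> topspace (prod_topology (alpha_top D) M) - ?S"
    proof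
      fix p assume p: "p \<in> {Some x} \<times> (topspace M - {\<pi> x})"
      then have "p \<in> topspace (prod_topology (alpha_top D) M)"
        unfolding topspace_prod_topology topspace_alpha using x by blast
      moreover obtain y where y: "p = (Some x, y)" "y \<noteq> \<pi> x" using p by blast
      moreover have "p \<notin> ?S" using y by (simp add: image_iff)
      ultimately show "p \<in> topspace (prod_topology (alpha_top D) M) - ?S" by blast
    qed
    then show "\<exists>U V. openin (alpha_top D) U \<and> openin M V \<and> a \<in> U \<and> b \<in> V \<and>
        U \<times> V \<subseteq> topspace (prod_topology (alpha_top D) M) - ?S"
      by (intro exI[of _ "{Some x}"] exI[of _ "topspace M - {\<pi> x}"])
         (use V openin_alpha_Some[OF x(2)] x b xb in simp)
  qed
qed

lemma compact_glue:
  assumes "compact_space M" "Hausdorff_space M" "\<pi> ` D \<subseteq> topspace M"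
  shows "compact_space (glue_top D \<pi> M)"
  unfolding glue_top_def
  by (intro compact_space_subtopology closedin_compact_space closedin_glue_set assms
        compact_space_prod_topology[THEN iffD2]) (simp add: compact_alpha assms)

lemma openin_glue_point:
  assumes "x \<in> D" "\<pi> x \<in> topspace M"
  shows "openin (glue_top D \<pi> M) {(Some x, \<pi> x)}"
proof -
  have "openin (prod_topology (alpha_top D) M) ({Some x} \<times> topspace M)"
    using openin_alpha_Some[OF assms(1)] by (simp add: openin_prod_Times_iff)
  moreover have "{(Some x, \<pi> x)} = ({Some x} \<times> topspace M) \<inter> ((\<lambda>x. (Some x, \<pi> x)) ` D \<union> ({None} \<times> topspace M))"
  proof
    show "{(Some x, \<pi> x)} \<subseteq> ({Some x} \<times> topspace M) \<inter> ((\<lambda>x. (Some x, \<pi> x)) ` D \<union> ({None} \<times> topspace M))"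
      using assms by simp
    show "({Some x} \<times> topspace M) \<inter> ((\<lambda>x. (Some x, \<pi> x)) ` D \<union> ({None} \<times> topspace M)) \<subseteq> {(Some x, \<pi> x)}"
      by auto
  qed
  ultimately show ?thesis unfolding glue_top_def openin_subtopology by blast
qed

lemma glue_basic_open:
  assumes "finite F" "openin M V"
  shows "openin (glue_top D \<pi> M) ((insert None (Some ` (D - F)) \<times> V) \<inter> ((\<lambda>x. (Some x, \<pi> x)) ` D \<union> ({None} \<times> topspace M)))"
proof -
  have "Some ` D - insert None (Some ` (D - F)) \<subseteq> Some ` F" by auto
  then have "finite (Some ` D - insert None (Some ` (D - F)))"
    using assms(1) finite_subset by blast
  then have "openin (alpha_top D) (insert None (Some ` (D - F)))"
    unfolding openin_alpha by auto
  then have "openin (prod_topology (alpha_top D) M) (insert None (Some ` (D - F)) \<times> V)"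
    using assms(2) by (simp add: openin_prod_Times_iff)
  then show ?thesis unfolding glue_top_def openin_subtopology by blast
qed

lemma glue_nbhd_None:
  assumes "openin (glue_top D \<pi> M) W" "(None, b) \<in> W"
  obtains F V where "finite F" "openin M V" "b \<in> V"
    "\<And>x. x \<in> D \<Longrightarrow> x \<notin> F \<Longrightarrow> \<pi> x \<in> V \<Longrightarrow> (Some x, \<pi> x) \<in> W"
    "\<And>y. y \<in> V \<Longrightarrow> (None, y) \<in> W"
proof -
  let ?S = "(\<lambda>x. (Some x, \<pi> x)) ` D \<union> ({None} \<times> topspace M)"
  have "\<exists>T. openin (prod_topology (alpha_top D) M) T \<and> W = T \<inter> ?S"
    using assms(1) unfolding glue_top_def openin_subtopology .
  then obtain T where T: "openin (prod_topology (alpha_top D) M) T" "W = T \<inter> ?S"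
    by blast
  have "(None, b) \<in> T" using assms(2) unfolding T(2) by blast
  moreover have "\<forall>x y. (x,y) \<in> T \<longrightarrow> (\<exists>U V. openin (alpha_top D) U \<and> openin M V \<and> x \<in> U \<and> y \<in> V \<and> U \<times> V \<subseteq> T)"
    by (rule T(1)[unfolded openin_prod_topology_alt])
  ultimately have "\<exists>U V. openin (alpha_top D) U \<and> openin M V \<and> None \<in> U \<and> b \<in> V \<and> U \<times> V \<subseteq> T"
    by simp
  then obtain U V where UV: "openin (alpha_top D) U" "openin M V" "None \<in> U" "b \<in> V" "U \<times> V \<subseteq> T"
    by blast
  have finU: "finite (Some ` D - U)" using UV(1,3) unfolding openin_alpha by blast
  let ?F = "{x \<in> D. Some x \<notin> U}"
  have "Some ` ?F \<subseteq> Some ` D - U" by blast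
  then have "finite (Some ` ?F)" using finU finite_subset by blast
  then have finF: "finite ?F" by (rule finite_imageD) simp
  have Vsub: "V \<subseteq> topspace M" using UV(2) openin_subset by blast
  show thesis
  proof (rule that[OF finF UV(2) UV(4)])
    fix x assume x: "x \<in> D" "x \<notin> ?F" "\<pi> x \<in> V"
    then have "(Some x, \<pi> x) \<in> U \<times> V" by simp
    then have "(Some x, \<pi> x) \<in> T" using UV(5) by blast
    moreover have "(Some x, \<pi> x) \<in> ?S" using x by simp
    ultimately show "(Some x, \<pi> x) \<in> W" using T(2) by blast
  next
    fix y assume y: "y \<in> V"
    then have "(None, y) \<in> T" using UV(3,5) by blast
    moreover have "(None, y) \<in> ?S" using y Vsub by blast
    ultimately show "(None, y) \<in> W" using T(2) by blast
  qed
qed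

lemma cont_at_real:
  assumes "continuous_map X euclideanreal f" "p \<in> topspace X" "\<epsilon> > 0"
  shows "\<exists>W. openin X W \<and> p \<in> W \<and> (\<forall>q\<in>W. \<bar>f q - f p\<bar> < \<epsilon>)"
proof -
  have "openin X {x \<in> topspace X. f x \<in> ball (f p) \<epsilon>}"
    using assms(1) by (rule openin_continuous_map_preimage) simp
  moreover have "p \<in> {x \<in> topspace X. f x \<in> ball (f p) \<epsilon>}" using assms(2,3) by simp
  moreover have "\<forall>q\<in>{x \<in> topspace X. f x \<in> ball (f p) \<epsilon>}. \<bar>f q - f p\<bar> < \<epsilon>"
    by (simp add: dist_real_def abs_minus_commute)
  ultimately show ?thesis by blast
qed

lemma cont_by_eps:
  assumes "\<And>p \<epsilon>. p \<in> topspace X \<Longrightarrow> \<epsilon> > 0 \<Longrightarrow> \<exists>W. openin X W \<and> p \<in> W \<and> (\<forall>q\<in>W. \<bar>g q - g p\<bar> < \<epsilon>)"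
  shows "continuous_map X euclideanreal g"
  unfolding continuous_map
proof (intro conjI allI impI)
  show "g ` topspace X \<subseteq> topspace euclideanreal" by simp
  fix U :: "real set" assume "openin euclideanreal U"
  then have U: "open U" by simp
  show "openin X {x \<in> topspace X. g x \<in> U}"
    unfolding openin_subopen[of X "{x \<in> topspace X. g x \<in> U}"]
  proof
    fix p assume p: "p \<in> {x \<in> topspace X. g x \<in> U}"
    then obtain \<epsilon> where e: "\<epsilon> > 0" "ball (g p) \<epsilon> \<subseteq> U" using U open_contains_ball by blast
    obtain W where W: "openin X W" "p \<in> W" "\<forall>q\<in>W. \<bar>g q - g p\<bar> < \<epsilon>" using assms p e(1) by blast
    have "W \<subseteq> {x \<in> topspace X. g x \<in> U}"
    proof
      fix q assume q: "q \<in> W"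
      then have "\<bar>g q - g p\<bar> < \<epsilon>" using W(3) by blast
      then have "g q \<in> ball (g p) \<epsilon>" by (metis mem_ball dist_real_def dist_commute)
      then show "q \<in> {x \<in> topspace X. g x \<in> U}" using e(2) q W(1) openin_subset by blast
    qed
    then show "\<exists>T. openin X T \<and> p \<in> T \<and> T \<subseteq> {x \<in> topspace X. g x \<in> U}" using W by blast
  qed
qed

lemma infinite_fiber:
  assumes "infinite A" "finite (\<pi> ` A)"
  obtains m where "m \<in> \<pi> ` A" "infinite {x \<in> A. \<pi> x = m}"
proof -
  have "A = (\<Union>m\<in>\<pi> ` A. {x \<in> A. \<pi> x = m})" by blast
  moreover have "\<not> (\<forall>m\<in>\<pi> ` A. finite {x \<in> A. \<pi> x = m})"
  proof
    assume "\<forall>m\<in>\<pi> ` A. finite {x \<in> A. \<pi> x = m}"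
    then have "finite (\<Union>m\<in>\<pi> ` A. {x \<in> A. \<pi> x = m})" using assms(2) by blast
    then show False using assms(1) calculation by simp
  qed
  ultimately show thesis using that by blast
qed

lemma glue_cont_nbhd:
  assumes pi: "\<pi> ` D \<subseteq> topspace M"
    and f: "continuous_map (glue_top D \<pi> M) euclideanreal f" and ep: "\<delta> > 0"
    and m: "m \<in> topspace M"
  obtains F V where "finite F" "openin M V" "m \<in> V"
      "\<And>x. x \<in> D \<Longrightarrow> x \<notin> F \<Longrightarrow> \<pi> x \<in> V \<Longrightarrow> \<bar>f (Some x, \<pi> x) - f (None, m)\<bar> < \<delta>"
      "\<And>y. y \<in> V \<Longrightarrow> \<bar>f (None, y) - f (None, m)\<bar> < \<delta>"
proof -
  have ts: "topspace (glue_top D \<pi> M) = (\<lambda>x. (Some x, \<pi> x)) ` D \<union> ({None} \<times> topspace M)"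
    using pi by (rule topspace_glue)
  have "(None, m) \<in> topspace (glue_top D \<pi> M)" using m ts by simp
  then have "\<exists>W. openin (glue_top D \<pi> M) W \<and> (None, m) \<in> W \<and> (\<forall>q\<in>W. \<bar>f q - f (None, m)\<bar> < \<delta>)"
    using cont_at_real[OF f _ ep] by blast
  then obtain W where W: "openin (glue_top D \<pi> M) W" "(None, m) \<in> W"
        "\<forall>q\<in>W. \<bar>f q - f (None, m)\<bar> < \<delta>"
    by blast
  obtain F V where FV: "finite F" "openin M V" "m \<in> V"
      "\<And>x. x \<in> D \<Longrightarrow> x \<notin> F \<Longrightarrow> \<pi> x \<in> V \<Longrightarrow> (Some x, \<pi> x) \<in> W"
      "\<And>y. y \<in> V \<Longrightarrow> (None, y) \<in> W"
    by (rule glue_nbhd_None[OF W(1) W(2)]) blast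
  show thesis
  proof (rule that[OF FV(1) FV(2) FV(3)])
    fix x assume "x \<in> D" "x \<notin> F" "\<pi> x \<in> V"
    then have "(Some x, \<pi> x) \<in> W" by (rule FV(4))
    then show "\<bar>f (Some x, \<pi> x) - f (None, m)\<bar> < \<delta>" using W(3) by blast
  next
    fix y assume "y \<in> V"
    then have "(None, y) \<in> W" by (rule FV(5))
    then show "\<bar>f (None, y) - f (None, m)\<bar> < \<delta>" using W(3) by blast
  qed
qed

lemma infinite_nonempty: "infinite S \<Longrightarrow> \<exists>x. x \<in> S"
  by (metis finite.emptyI ex_in_conv)

lemma key_finite:
  assumes pi: "\<pi> ` D \<subseteq> topspace M" and cc: "countably_compact_at M (\<pi> ` D)"
    and f: "continuous_map (glue_top D \<pi> M) euclideanreal f" and ep: "\<epsilon> > 0"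
  shows "finite {x \<in> D. \<epsilon> \<le> \<bar>f (Some x, \<pi> x) - f (None, \<pi> x)\<bar>}"
proof (rule ccontr)
  let ?A = "{x \<in> D. \<epsilon> \<le> \<bar>f (Some x, \<pi> x) - f (None, \<pi> x)\<bar>}"
  assume inf: "infinite ?A"
  have ep2: "\<epsilon>/2 > 0" using ep by simp
  show False
  proof (cases "finite (\<pi> ` ?A)")
    case True
    obtain m where m: "m \<in> \<pi> ` ?A" "infinite {x \<in> ?A. \<pi> x = m}"
      by (rule infinite_fiber[OF inf True])
    have mM: "m \<in> topspace M" using m(1) pi by blast
    obtain F V where FV: "finite F" "openin M V" "m \<in> V"
      "\<And>x. x \<in> D \<Longrightarrow> x \<notin> F \<Longrightarrow> \<pi> x \<in> V \<Longrightarrow> \<bar>f (Some x, \<pi> x) - f (None, m)\<bar> < \<epsilon>/2"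
      by (rule glue_cont_nbhd[OF pi f ep2 mM]) blast
    have "infinite ({x \<in> ?A. \<pi> x = m} - F)" using m(2) FV(1) by simp
    then obtain x where x: "x \<in> {x \<in> ?A. \<pi> x = m} - F" using infinite_nonempty by blast
    then have "x \<in> D" "x \<notin> F" "\<pi> x \<in> V" using FV(3) by auto
    then have "\<bar>f (Some x, \<pi> x) - f (None, m)\<bar> < \<epsilon>/2" by (rule FV(4))
    moreover have "\<epsilon> \<le> \<bar>f (Some x, \<pi> x) - f (None, m)\<bar>" using x by auto
    ultimately show False using ep by linarith
  next
    case False
    have "\<pi> ` ?A \<subseteq> \<pi> ` D" by blast
    then have "\<exists>m\<in>topspace M. \<forall>U. openin M U \<and> m \<in> U \<longrightarrow> infinite (U \<inter> \<pi> ` ?A)"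
      using cc False unfolding countably_compact_at_def by simp
    then obtain m where m: "m \<in> topspace M"
      "\<And>U. openin M U \<Longrightarrow> m \<in> U \<Longrightarrow> infinite (U \<inter> \<pi> ` ?A)"
      by blast
    obtain F V where FV: "finite F" "openin M V" "m \<in> V"
      "\<And>x. x \<in> D \<Longrightarrow> x \<notin> F \<Longrightarrow> \<pi> x \<in> V \<Longrightarrow> \<bar>f (Some x, \<pi> x) - f (None, m)\<bar> < \<epsilon>/2"
      "\<And>y. y \<in> V \<Longrightarrow> \<bar>f (None, y) - f (None, m)\<bar> < \<epsilon>/2"
      by (rule glue_cont_nbhd[OF pi f ep2 m(1)]) blast
    have "infinite (V \<inter> \<pi> ` ?A)" using m(2) FV(2,3) by blast
    then have "infinite (V \<inter> \<pi> ` ?A - \<pi> ` F)" using FV(1) by simp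
    then obtain y where y: "y \<in> V \<inter> \<pi> ` ?A - \<pi> ` F" using infinite_nonempty by blast
    then obtain x where x: "x \<in> ?A" "y = \<pi> x" "x \<notin> F" by blast
    have xD: "x \<in> D" "\<pi> x \<in> V" using x y by auto
    have "\<bar>f (Some x, \<pi> x) - f (None, m)\<bar> < \<epsilon>/2" using xD(1) x(3) xD(2) by (rule FV(4))
    moreover have "\<bar>f (None, \<pi> x) - f (None, m)\<bar> < \<epsilon>/2" using xD(2) by (rule FV(5))
    moreover have "\<epsilon> \<le> \<bar>f (Some x, \<pi> x) - f (None, \<pi> x)\<bar>" using x by blast
    ultimately show False by linarith
  qed
qed

lemma glue_embedding:
  assumes emb: "embedding_map M B e" and pi: "\<pi> ` D \<subseteq> topspace M"
    and eM: "e ` topspace M \<subseteq> topspace B"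
  shows "embedding_map (glue_top D \<pi> M) (glue_top D (e \<circ> \<pi>) B) (\<lambda>(a, y). (a, e y))"
proof -
  let ?A = "alpha_top D" and ?E = "e ` topspace M" and ?h = "\<lambda>(a, y). (a, e y)"
  let ?SX = "(\<lambda>x. (Some x, \<pi> x)) ` D \<union> ({None} \<times> topspace M)"
  let ?SK = "(\<lambda>x. (Some x, (e \<circ> \<pi>) x)) ` D \<union> ({None} \<times> topspace B)"
  have "\<exists>e'. homeomorphic_maps M (subtopology B ?E) e e'"
    using emb unfolding embedding_map_def homeomorphic_map_maps .
  then obtain e' where ee: "homeomorphic_maps M (subtopology B ?E) e e'" by blast
  have idm: "homeomorphic_maps ?A ?A id id" by (simp add: homeomorphic_maps_id)
  have P0: "homeomorphic_maps (prod_topology ?A M) (prod_topology ?A (subtopology B ?E))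
        (\<lambda>(x,y). (id x, e y)) (\<lambda>(x,y). (id x, e' y))"
    by (rule homeomorphic_maps_prod[THEN iffD2]) (use idm ee in blast)
  have hid: "(\<lambda>(x,y). (id x, e y)) = ?h" by auto
  have P: "homeomorphic_maps (prod_topology ?A M) (subtopology (prod_topology ?A B) (topspace ?A \<times> ?E))
        ?h (\<lambda>(x,y). (id x, e' y))"
    using P0 unfolding hid prod_topology_subtopology(2) .
  have SXt: "topspace (prod_topology ?A M) \<inter> ?SX = ?SX"
    using pi by (auto simp: topspace_alpha)
  have hSX1: "?h ` ?SX \<subseteq> topspace ?A \<times> ?E" using pi by (auto simp: topspace_alpha)
  have hSX2: "?h ` ?SX \<subseteq> ?SK" using eM by auto
  have hSX3: "?h ` ?SX \<subseteq> topspace ?A \<times> topspace B" using hSX1 eM by auto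
  have "?h ` ?SX =
        topspace (subtopology (prod_topology ?A B) (topspace ?A \<times> ?E)) \<inter> ?h ` ?SX"
    unfolding topspace_subtopology topspace_prod_topology
    by (rule Int_absorb1[symmetric]) (rule Int_greatest[OF hSX3 hSX1])
  then have "?h ` (topspace (prod_topology ?A M) \<inter> ?SX) =
        topspace (subtopology (prod_topology ?A B) (topspace ?A \<times> ?E)) \<inter> ?h ` ?SX"
    by (simp only: SXt)
  then have Q: "homeomorphic_maps (subtopology (prod_topology ?A M) ?SX)
      (subtopology (subtopology (prod_topology ?A B) (topspace ?A \<times> ?E)) (?h ` ?SX)) ?h (\<lambda>(x,y). (id x, e' y))"
    by (rule homeomorphic_maps_subtopologies[OF P])
  have eq1: "(topspace ?A \<times> ?E) \<inter> ?h ` ?SX = ?SK \<inter> ?h ` ?SX"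
    using Int_absorb1[OF hSX1] Int_absorb1[OF hSX2] by simp
  have tsX: "topspace (glue_top D \<pi> M) = ?SX" using pi by (rule topspace_glue)
  have eqK: "subtopology (glue_top D (e \<circ> \<pi>) B) (?h ` ?SX) =
     subtopology (subtopology (prod_topology ?A B) (topspace ?A \<times> ?E)) (?h ` ?SX)"
    unfolding glue_top_def subtopology_subtopology eq1 by (rule refl)
  have eqX: "glue_top D \<pi> M = subtopology (prod_topology ?A M) ?SX"
    unfolding glue_top_def by (rule refl)
  have Q2: "homeomorphic_maps (glue_top D \<pi> M) (subtopology (glue_top D (e \<circ> \<pi>) B) (?h ` ?SX)) ?h (\<lambda>(x,y). (id x, e' y))"
    unfolding eqX eqK by (rule Q)
  have "homeomorphic_map (glue_top D \<pi> M)
      (subtopology (glue_top D (e \<circ> \<pi>) B) (?h ` topspace (glue_top D \<pi> M))) ?h"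
    unfolding tsX by (rule homeomorphic_map_maps[THEN iffD2, OF exI, OF Q2])
  then show ?thesis unfolding embedding_map_def .
qed

lemma glue_dense:
  assumes pi: "\<pi> ` D \<subseteq> topspace M" and eM: "e ` topspace M \<subseteq> topspace B"
    and dense: "B closure_of (e ` topspace M) = topspace B"
  shows "(glue_top D (e \<circ> \<pi>) B) closure_of ((\<lambda>(a, y). (a, e y)) ` topspace (glue_top D \<pi> M))
         = topspace (glue_top D (e \<circ> \<pi>) B)"
proof -
  let ?K = "glue_top D (e \<circ> \<pi>) B" and ?X = "glue_top D \<pi> M" and ?h = "\<lambda>(a, y). (a, e y)"
  have piB: "(e \<circ> \<pi>) ` D \<subseteq> topspace B" using pi eM by auto
  have tsX: "topspace ?X = (\<lambda>x. (Some x, \<pi> x)) ` D \<union> ({None} \<times> topspace M)"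
    using pi by (rule topspace_glue)
  have tsK: "topspace ?K = (\<lambda>x. (Some x, (e \<circ> \<pi>) x)) ` D \<union> ({None} \<times> topspace B)"
    using piB by (rule topspace_glue)
  have hsub: "?h ` topspace ?X \<subseteq> topspace ?K" unfolding tsX tsK using eM by auto
  have "topspace ?K \<subseteq> ?K closure_of (?h ` topspace ?X)"
  proof
    fix p assume p: "p \<in> topspace ?K"
    show "p \<in> ?K closure_of (?h ` topspace ?X)"
    proof (cases "fst p")
      case (Some x)
      then have x: "x \<in> D" "p = (Some x, e (\<pi> x))" using p unfolding tsK by auto
      have "(Some x, \<pi> x) \<in> topspace ?X" unfolding tsX using x by simp
      then have "p \<in> ?h ` topspace ?X" using x by force
      then show ?thesis using closure_of_subset[OF hsub] by blast
    next
      case None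
      then obtain b where b: "p = (None, b)" "b \<in> topspace B" using p unfolding tsK by auto
      show ?thesis unfolding in_closure_of
      proof (intro conjI allI impI)
        show "p \<in> topspace ?K" by (rule p)
        fix T assume T: "p \<in> T \<and> openin ?K T"
        then have T1: "openin ?K T" and T2: "(None, b) \<in> T" using b by auto
        obtain F V where FV: "finite F" "openin B V" "b \<in> V" "\<And>y. y \<in> V \<Longrightarrow> (None, y) \<in> T"
          by (rule glue_nbhd_None[OF T1 T2]) blast
        have "b \<in> B closure_of (e ` topspace M)" using dense b(2) by simp
        then have "\<forall>T. b \<in> T \<and> openin B T \<longrightarrow> (\<exists>y. y \<in> e ` topspace M \<and> y \<in> T)"
          unfolding in_closure_of by simp
        then obtain y where y: "y \<in> e ` topspace M" "y \<in> V" using FV(2,3) by blast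
        then obtain m where m: "m \<in> topspace M" "y = e m" by blast
        have "(None, m) \<in> topspace ?X" unfolding tsX using m by simp
        then have "(None, y) \<in> ?h ` topspace ?X" using m by force
        moreover have "(None, y) \<in> T" using FV(4) y(2) by simp
        ultimately show "\<exists>y. y \<in> ?h ` topspace ?X \<and> y \<in> T" by blast
      qed
    qed
  qed
  then show ?thesis using closure_of_subset_topspace by (rule subset_antisym[rotated])
qed

lemma glue_ext:
  assumes pi: "\<pi> ` D \<subseteq> topspace M" and eM: "e ` topspace M \<subseteq> topspace B"
    and cc: "countably_compact_at M (\<pi> ` D)"
    and ext: "\<forall>f. continuous_map M euclideanreal f \<and> bounded (f ` topspace M) \<longrightarrow>
        (\<exists>g. continuous_map B euclideanreal g \<and> (\<forall>x\<in>topspace M. g (e x) = f x))"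
    and f: "continuous_map (glue_top D \<pi> M) euclideanreal f"
    and fb: "bounded (f ` topspace (glue_top D \<pi> M))"
  shows "\<exists>g. continuous_map (glue_top D (e \<circ> \<pi>) B) euclideanreal g \<and>
             (\<forall>x\<in>topspace (glue_top D \<pi> M). g ((\<lambda>(a, y). (a, e y)) x) = f x)"
proof -
  let ?K = "glue_top D (e \<circ> \<pi>) B" and ?X = "glue_top D \<pi> M" and ?h = "\<lambda>(a, y). (a, e y)"
  have piB: "(e \<circ> \<pi>) ` D \<subseteq> topspace B" using pi eM by auto
  have tsX: "topspace ?X = (\<lambda>x. (Some x, \<pi> x)) ` D \<union> ({None} \<times> topspace M)"
    using pi by (rule topspace_glue)
  have tsK: "topspace ?K = (\<lambda>x. (Some x, (e \<circ> \<pi>) x)) ` D \<union> ({None} \<times> topspace B)"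
    using piB by (rule topspace_glue)
  have cN: "continuous_map M (prod_topology (alpha_top D) M) (\<lambda>m. (None, m))"
    by (intro continuous_map_pairedI) (auto simp: topspace_alpha)
  have cN2: "continuous_map M ?X (\<lambda>m. (None, m))"
    unfolding glue_top_def continuous_map_in_subtopology using cN by auto
  have f0c: "continuous_map M euclideanreal (\<lambda>m. f (None, m))"
    using continuous_map_compose[OF cN2 f] by (simp add: o_def)
  have "(\<lambda>m. f (None, m)) ` topspace M \<subseteq> f ` topspace ?X" unfolding tsX by auto
  then have f0b: "bounded ((\<lambda>m. f (None, m)) ` topspace M)" using fb bounded_subset by blast
  have "\<exists>g. continuous_map B euclideanreal g \<and> (\<forall>x\<in>topspace M. g (e x) = f (None, x))"
    using ext f0c f0b by blast
  then obtain g0 where g0: "continuous_map B euclideanreal g0" "\<And>x. x \<in> topspace M \<Longrightarrow> g0 (e x) = f (None, x)"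
    by blast
  define g where "g p = (case fst p of None \<Rightarrow> g0 (snd p) | Some x \<Rightarrow> f (Some x, \<pi> x))" for p
  have gS: "g (Some x, y) = f (Some x, \<pi> x)" for x y by (simp add: g_def)
  have gN: "g (None, y) = g0 y" for y by (simp add: g_def)
  have "continuous_map ?K euclideanreal g"
  proof (rule cont_by_eps)
    fix p and \<epsilon> :: real assume p: "p \<in> topspace ?K" and ep: "\<epsilon> > 0"
    show "\<exists>W. openin ?K W \<and> p \<in> W \<and> (\<forall>q\<in>W. \<bar>g q - g p\<bar> < \<epsilon>)"
    proof (cases "fst p")
      case (Some x)
      then have x: "x \<in> D" "p = (Some x, (e \<circ> \<pi>) x)" using p unfolding tsK by auto
      have "(e \<circ> \<pi>) x \<in> topspace B" using piB x(1) by auto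
      then have "openin ?K {p}" unfolding x(2) by (rule openin_glue_point[OF x(1)])
      then show ?thesis using ep by auto
    next
      case None
      then obtain b where b: "p = (None, b)" "b \<in> topspace B" using p unfolding tsK by auto
      have ep2: "\<epsilon>/2 > 0" using ep by simp
      let ?Fin = "{x \<in> D. \<epsilon>/2 \<le> \<bar>f (Some x, \<pi> x) - f (None, \<pi> x)\<bar>}"
      have fin: "finite ?Fin" by (rule key_finite[OF pi cc f ep2])
      have "\<exists>W. openin B W \<and> b \<in> W \<and> (\<forall>q\<in>W. \<bar>g0 q - g0 b\<bar> < \<epsilon>/2)"
        by (rule cont_at_real[OF g0(1) b(2) ep2])
      then obtain W0 where W0: "openin B W0" "b \<in> W0" "\<And>q. q \<in> W0 \<Longrightarrow> \<bar>g0 q - g0 b\<bar> < \<epsilon>/2"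
        by blast
      let ?W = "(insert None (Some ` (D - ?Fin)) \<times> W0) \<inter> ((\<lambda>x. (Some x, (e \<circ> \<pi>) x)) ` D \<union> ({None} \<times> topspace B))"
      have Wo: "openin ?K ?W" by (rule glue_basic_open[OF fin W0(1)])
      have pW: "p \<in> ?W" using b W0(2) by simp
      have "\<forall>q\<in>?W. \<bar>g q - g p\<bar> < \<epsilon>"
      proof
        fix q assume q: "q \<in> ?W"
        show "\<bar>g q - g p\<bar> < \<epsilon>"
        proof (cases "fst q")
          case None
          then obtain y where y: "q = (None, y)" "y \<in> W0" using q by auto
          then show ?thesis using W0(3)[OF y(2)] b(1) gN ep by simp
        next
          case (Some x)
          then have x: "q = (Some x, e (\<pi> x))" "x \<in> D" "x \<notin> ?Fin" "e (\<pi> x) \<in> W0" using q by auto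
          have pxM: "\<pi> x \<in> topspace M" using pi x(2) by auto
          have 1: "\<bar>f (Some x, \<pi> x) - f (None, \<pi> x)\<bar> < \<epsilon>/2" using x(2,3) by auto
          have 2: "\<bar>f (None, \<pi> x) - g0 b\<bar> < \<epsilon>/2" using W0(3)[OF x(4)] g0(2)[OF pxM] by simp
          have "g q = f (Some x, \<pi> x)" using x(1) gS by simp
          moreover have "g p = g0 b" using b(1) gN by simp
          ultimately show ?thesis using 1 2 by linarith
        qed
      qed
      then show ?thesis using Wo pW by blast
    qed
  qed
  moreover have "\<forall>x\<in>topspace ?X. g (?h x) = f x"
  proof
    fix x assume x: "x \<in> topspace ?X"
    show "g (?h x) = f x"
    proof (cases "fst x")
      case None
      then obtain m where m: "x = (None, m)" "m \<in> topspace M" using x unfolding tsX by auto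
      then show ?thesis using g0(2)[OF m(2)] gN by simp
    next
      case (Some z)
      then have z: "x = (Some z, \<pi> z)" using x unfolding tsX by auto
      then show ?thesis using gS by simp
    qed
  qed
  ultimately show ?thesis by blast
qed

theorem proposition1p5:
  fixes D :: "'a set" and M :: "'b topology" and \<pi> :: "'a \<Rightarrow> 'b"
    and B :: "'c topology" and e :: "'b \<Rightarrow> 'c"
  assumes "tychonoff_space M"
    and "\<pi> ` D \<subseteq> topspace M"
    and "countably_compact_at M (\<pi> ` D)"
    and "stone_cech_compactification M e B"
  shows "stone_cech_compactification (glue_top D \<pi> M) (\<lambda>(a, y). (a, e y))
           (glue_top D (e \<circ> \<pi>) B)"
proof -
  have cB: "compact_space B" using assms(4) unfolding stone_cech_compactification_def by (elim conjE)
  have hB: "Hausdorff_space B" using assms(4) unfolding stone_cech_compactification_def by (elim conjE)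
  have emb: "embedding_map M B e" using assms(4) unfolding stone_cech_compactification_def by (elim conjE)
  have dense: "B closure_of (e ` topspace M) = topspace B"
    using assms(4) unfolding stone_cech_compactification_def by (elim conjE)
  have ext: "\<forall>f. continuous_map M euclideanreal f \<and> bounded (f ` topspace M) \<longrightarrow>
        (\<exists>g. continuous_map B euclideanreal g \<and> (\<forall>x\<in>topspace M. g (e x) = f x))"
    using assms(4) unfolding stone_cech_compactification_def by (elim conjE)
  have hm: "homeomorphic_map M (subtopology B (e ` topspace M)) e" using emb unfolding embedding_map_def .
  have eq: "e ` topspace M = topspace B \<inter> e ` topspace M"
    using homeomorphic_imp_surjective_map[OF hm] unfolding topspace_subtopology .
  have eM: "e ` topspace M \<subseteq> topspace B" by (subst eq) (rule Int_lower1)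
  have piB: "(e \<circ> \<pi>) ` D \<subseteq> topspace B" using assms(2) eM by auto
  have 1: "compact_space (glue_top D (e \<circ> \<pi>) B)" by (rule compact_glue[OF cB hB piB])
  have 2: "Hausdorff_space (glue_top D (e \<circ> \<pi>) B)" by (rule Hausdorff_glue[OF hB])
  have 3: "embedding_map (glue_top D \<pi> M) (glue_top D (e \<circ> \<pi>) B) (\<lambda>(a, y). (a, e y))"
    by (rule glue_embedding[OF emb assms(2) eM])
  have 4: "(glue_top D (e \<circ> \<pi>) B) closure_of ((\<lambda>(a, y). (a, e y)) ` topspace (glue_top D \<pi> M))
         = topspace (glue_top D (e \<circ> \<pi>) B)"
    by (rule glue_dense[OF assms(2) eM dense])
  have 5: "\<forall>f. continuous_map (glue_top D \<pi> M) euclideanreal f \<and> bounded (f ` topspace (glue_top D \<pi> M)) \<longrightarrow>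
        (\<exists>g. continuous_map (glue_top D (e \<circ> \<pi>) B) euclideanreal g \<and>
             (\<forall>x\<in>topspace (glue_top D \<pi> M). g ((\<lambda>(a, y). (a, e y)) x) = f x))"
  proof (intro allI impI)
    fix f assume "continuous_map (glue_top D \<pi> M) euclideanreal f \<and> bounded (f ` topspace (glue_top D \<pi> M))"
    then show "\<exists>g. continuous_map (glue_top D (e \<circ> \<pi>) B) euclideanreal g \<and>
             (\<forall>x\<in>topspace (glue_top D \<pi> M). g ((\<lambda>(a, y). (a, e y)) x) = f x)"
      using glue_ext[OF assms(2) eM assms(3) ext] by blast
  qed
  show ?thesis unfolding stone_cech_compactification_def
    by (intro conjI 1 2 3 4 5)
qed

end
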